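(* Let $n\ge2$, $\epsilon\in(0,1)$, let $Q^0\in\mathbb{S}^n$ with $Q^0_i>0$ for all $i$, let $\widehat{P}\in\mathbb{S}^n$ be fixed (not varying with $p$), take $\mathcal{Q}=\{Q^0\}$, and for each $p$ let $\alpha_{\mathrm{L}}=\alpha_{\mathrm{L}}(p)$ be as defined below. Then $$\alpha_{\mathrm{L}}\le\kappa(\widehat{P}\,\|\,Q^0)\qquad\text{and}\qquad\lim_{p\to\infty}\alpha_{\mathrm{L}}=\kappa(\widehat{P}\,\|\,Q^0).$$
   Context: $\mathbb{S}^n=\{P\in\mathbb{R}^n:\sum_iP_i=1,\ P_i\ge0\}$. $D(P\|Q)=\sum_iP_i\log(P_i/Q_i)$. The separation distance is $\kappa(P\|Q)=\max_{i\in[n]}\left(1-\frac{P_i}{Q_i}\right)$. For $\alpha\in[0,1]$ let $\mathcal{P}(\widehat{P},\alpha)=\{P\in\mathbb{S}^n: P_i\le \widehat{P}_i/(1-\alpha),\ i=1,\dots,n\}$ and $D^*_\alpha=\min_{P\in\mathcal{P}(\widehat{P},\alpha),\,Q\in\mathcal{Q}}D(P\|Q)=\min_{P\in\mathcal{P}(\widehat{P},\alpha)}D(P\|Q^0)$. Define $$\alpha_{\mathrm{L}}=\max\left\{\alpha:\ D^*_\alpha\ \ge\ \frac{1}{p(1-\alpha)}\log\left(\frac1\epsilon\right)+\frac{2n}{p(1-\alpha)}\log\big(p(1-\alpha)+1\big)\right\}.$$ *)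

theory Defs
  imports "HOL-Analysis.Analysis"
begin

definition prob_simplex :: "('n::finite \<Rightarrow> real) set" where
  "prob_simplex = {P. (\<Sum>i\<in>UNIV. P i) = 1 \<and> (\<forall>i. P i \<ge> 0)}"

definition KL :: "('n::finite \<Rightarrow> real) \<Rightarrow> ('n \<Rightarrow> real) \<Rightarrow> real" where
  "KL P Q = (\<Sum>i\<in>UNIV. P i * ln (P i / Q i))"

definition sep_dist :: "('n::finite \<Rightarrow> real) \<Rightarrow> ('n \<Rightarrow> real) \<Rightarrow> real" where
  "sep_dist P Q = Max (range (\<lambda>i. 1 - P i / Q i))"

definition amb_set :: "('n::finite \<Rightarrow> real) \<Rightarrow> real \<Rightarrow> ('n \<Rightarrow> real) set" where
  "amb_set Phat \<alpha> = {P \<in> prob_simplex. \<forall>i. P i \<le> Phat i / (1 - \<alpha>)}"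

definition Dstar :: "('n::finite \<Rightarrow> real) \<Rightarrow> ('n \<Rightarrow> real) \<Rightarrow> real \<Rightarrow> real" where
  "Dstar Phat Q0 \<alpha> = Inf ((\<lambda>P. KL P Q0) ` amb_set Phat \<alpha>)"

definition alphaL_set :: "('n::finite \<Rightarrow> real) \<Rightarrow> ('n \<Rightarrow> real) \<Rightarrow> real \<Rightarrow> nat \<Rightarrow> real set" where
  "alphaL_set Phat Q0 \<epsilon> p = {\<alpha>. 0 \<le> \<alpha> \<and> \<alpha> < 1 \<and>
     Dstar Phat Q0 \<alpha> \<ge> 1 / (real p * (1 - \<alpha>)) * ln (1 / \<epsilon>)
        + 2 * real CARD('n) / (real p * (1 - \<alpha>)) * ln (real p * (1 - \<alpha>) + 1)}"

text \<open>alpha_L = max of that set (taken as its supremum); convention 0 if empty.\<close>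
definition alphaL :: "('n::finite \<Rightarrow> real) \<Rightarrow> ('n \<Rightarrow> real) \<Rightarrow> real \<Rightarrow> nat \<Rightarrow> real" where
  "alphaL Phat Q0 \<epsilon> p = (if alphaL_set Phat Q0 \<epsilon> p = {} then 0 else Sup (alphaL_set Phat Q0 \<epsilon> p))"

end

theory Submission
  imports Defs "HOL-Real_Asymp.Real_Asymp"
begin

lemma term_ge:
  fixes x q :: real
  assumes "0 \<le> x" "0 < q"
  shows "x * ln (x / q) \<ge> x - q"
proof (cases "x = 0")
  case True then show ?thesis using assms by simp
next
  case False
  then have x: "x > 0" using assms by simp
  have "ln (q / x) \<le> q / x - 1" using ln_le_minus_one[of "q/x"] x assms by simp
  moreover have "ln (x / q) = - ln (q / x)" using x assms by (simp add: ln_div)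
  ultimately have "ln (x / q) \<ge> 1 - q / x" by simp
  then have "x * ln (x / q) \<ge> x * (1 - q / x)" using x by (simp add: mult_left_mono)
  also have "x * (1 - q / x) = x - q" using x by (simp add: field_simps)
  finally show ?thesis .
qed

lemma term_strict:
  fixes x q b :: real
  assumes "0 \<le> x" "x \<le> b" "b < q"
  shows "x * ln (x / q) \<ge> x - q + (q - b + b * ln (b / q))"
proof (cases "x = 0")
  case True
  have b0: "b \<ge> 0" using assms by simp
  have q0: "q > 0" using assms by simp
  have "ln (b / q) \<le> 0"
  proof (cases "b = 0")
    case False
    then have "b / q > 0" "b / q < 1" using b0 q0 assms by auto
    then show ?thesis by simp
  qed simp
  then have "b * ln (b / q) \<le> 0" using b0 by (simp add: mult_nonneg_nonpos)
  then show ?thesis using True b0 by simp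
next
  case False
  then have x: "x > 0" using assms by simp
  have b: "b > 0" using x assms by simp
  have q: "q > 0" using b assms by simp
  have L: "ln (b / q) \<le> 0" using b q assms by simp
  have "ln (x / q) = ln (x / b) + ln (b / q)" using x b q by (simp add: ln_div)
  moreover have "ln (x / b) \<ge> 1 - b / x" using term_ge[of x b] x b
  proof -
    have "x * ln (x / b) \<ge> x - b" using term_ge[of x b] x b by simp
    then have "ln (x / b) \<ge> (x - b) / x" using x by (simp add: field_simps)
    then show ?thesis using x by (simp add: field_simps)
  qed
  ultimately have "x * ln (x / q) \<ge> x * (1 - b / x + ln (b / q))"
    using x by (simp add: mult_left_mono)
  also have "x * (1 - b / x + ln (b / q)) = x - b + x * ln (b / q)"
    using x by (simp add: field_simps)
  also have "x * ln (b / q) \<ge> b * ln (b / q)"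
    using L assms by (simp add: mult_right_mono_neg)
  then have "x - b + x * ln (b / q) \<ge> x - q + (q - b + b * ln (b / q))" by simp
  finally show ?thesis .
qed

lemma c_pos:
  fixes q b :: real
  assumes "0 \<le> b" "b < q"
  shows "q - b + b * ln (b / q) > 0"
proof (cases "b = 0")
  case True then show ?thesis using assms by simp
next
  case False
  then have b: "b > 0" using assms by simp
  have r: "q / b > 0" "q / b \<noteq> 1" using b assms by auto
  have "ln (q / b) \<le> q / b - 1" using ln_le_minus_one r by simp
  moreover have "ln (q / b) \<noteq> q / b - 1" using ln_eq_minus_one r by blast
  ultimately have "ln (q / b) < q / b - 1" by simp
  then have "b * ln (q / b) < b * (q / b - 1)" using b by simp
  also have "b * (q / b - 1) = q - b" using b by (simp add: field_simps)
  finally have "b * ln (q / b) < q - b" .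
  moreover have "ln (b / q) = - ln (q / b)" using b assms by (simp add: ln_div)
  ultimately show ?thesis by simp
qed

lemma KL_nonneg:
  fixes P Q :: "'n::finite \<Rightarrow> real"
  assumes "P \<in> prob_simplex" "Q \<in> prob_simplex" "\<forall>i. Q i > 0"
  shows "KL P Q \<ge> 0"
proof -
  have "(\<Sum>i\<in>UNIV. P i - Q i) \<le> KL P Q"
    unfolding KL_def using assms term_ge by (intro sum_mono) (auto simp: prob_simplex_def)
  moreover have "(\<Sum>i\<in>UNIV. P i - Q i) = 0"
    using assms by (simp add: sum_subtractf prob_simplex_def)
  ultimately show ?thesis by simp
qed

lemma KL_strict:
  fixes P Q :: "'n::finite \<Rightarrow> real"
  assumes "P \<in> prob_simplex" "Q \<in> prob_simplex" "\<forall>i. Q i > 0"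
    and "P j \<le> b" "b < Q j"
  shows "KL P Q \<ge> Q j - b + b * ln (b / Q j)"
proof -
  let ?c = "Q j - b + b * ln (b / Q j)"
  have P0: "\<forall>i. P i \<ge> 0" using assms by (simp add: prob_simplex_def)
  have "(\<Sum>i\<in>UNIV. P i - Q i + (if i = j then ?c else 0)) \<le> KL P Q"
    unfolding KL_def
  proof (intro sum_mono)
    fix i
    show "P i - Q i + (if i = j then ?c else 0) \<le> P i * ln (P i / Q i)"
      using term_ge[of "P i" "Q i"] term_strict[of "P i" b "Q i"] P0 assms by auto
  qed
  moreover have "(\<Sum>i\<in>UNIV. P i - Q i + (if i = j then ?c else 0)) = ?c"
    using assms by (simp add: sum.distrib sum_subtractf prob_simplex_def)
  ultimately show ?thesis by simp
qed

theorem theorem6: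
  fixes Q0 Phat :: "'n::finite \<Rightarrow> real" and \<epsilon> :: real
  assumes "CARD('n) \<ge> 2"
    and "0 < \<epsilon>" and "\<epsilon> < 1"
    and "Q0 \<in> prob_simplex" and "\<forall>i. Q0 i > 0"
    and "Phat \<in> prob_simplex"
  shows "(\<forall>p::nat. p \<ge> 1 \<longrightarrow> alphaL Phat Q0 \<epsilon> p \<le> sep_dist Phat Q0)
    \<and> ((\<lambda>p. alphaL Phat Q0 \<epsilon> p) \<longlonglongrightarrow> sep_dist Phat Q0)"
proof -
  define f where "f i = 1 - Phat i / Q0 i" for i
  define \<kappa> where "\<kappa> = sep_dist Phat Q0"
  have kap: "\<kappa> = Max (range f)" unfolding \<kappa>_def sep_dist_def f_def by simp
  have fin: "finite (range f)" by simp
  have f_le: "\<And>i. f i \<le> \<kappa>" unfolding kap using fin by simp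
  have "Max (range f) \<in> range f" by (rule Max_in[OF fin]) simp
  then obtain j where fj: "f j = \<kappa>" unfolding kap by (metis rangeE)
  have Q0pos: "\<And>i. Q0 i > 0" using assms by simp
  have Ph0: "\<And>i. Phat i \<ge> 0" using assms by (simp add: prob_simplex_def)
  have kap0: "\<kappa> \<ge> 0"
  proof (rule ccontr)
    assume "\<not> \<kappa> \<ge> 0"
    then have "\<And>i. f i < 0" using f_le by (meson le_less_trans not_le)
    then have "\<And>i. Q0 i < Phat i" using Q0pos unfolding f_def by (simp add: field_simps)
    then have "(\<Sum>i\<in>UNIV. Q0 i) < (\<Sum>i\<in>UNIV. Phat i)" by (intro sum_strict_mono) auto
    then show False using assms by (simp add: prob_simplex_def)
  qed
  define R where "R p \<alpha> = 1 / (real p * (1 - \<alpha>)) * ln (1 / \<epsilon>)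
        + 2 * real CARD('n) / (real p * (1 - \<alpha>)) * ln (real p * (1 - \<alpha>) + 1)" for p :: nat and \<alpha> :: real
  have setdef: "alphaL_set Phat Q0 \<epsilon> p = {\<alpha>. 0 \<le> \<alpha> \<and> \<alpha> < 1 \<and> Dstar Phat Q0 \<alpha> \<ge> R p \<alpha>}" for p
    unfolding alphaL_set_def R_def by simp
  have bddb: "bdd_below ((\<lambda>P. KL P Q0) ` amb_set Phat \<alpha>)" for \<alpha>
    by (rule bdd_belowI[of _ 0]) (use KL_nonneg assms in \<open>auto simp: amb_set_def\<close>)
  have notin: "\<alpha> \<notin> alphaL_set Phat Q0 \<epsilon> p" if "p \<ge> 1" "\<kappa> \<le> \<alpha>" for p \<alpha>
  proof
    assume a: "\<alpha> \<in> alphaL_set Phat Q0 \<epsilon> p"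
    then have a1: "\<alpha> < 1" "0 \<le> \<alpha>" and aD: "Dstar Phat Q0 \<alpha> \<ge> R p \<alpha>" by (auto simp: setdef)
    have "Q0 \<in> amb_set Phat \<alpha>"
      unfolding amb_set_def
    proof (intro CollectI conjI allI)
      fix i
      have "f i \<le> \<alpha>" using f_le[of i] that by simp
      then have "1 - \<alpha> \<le> Phat i / Q0 i" unfolding f_def by simp
      then have "(1 - \<alpha>) * Q0 i \<le> Phat i" using Q0pos[of i] by (simp add: field_simps)
      then show "Q0 i \<le> Phat i / (1 - \<alpha>)" using a1 by (simp add: field_simps)
    qed (use assms in auto)
    then have "Dstar Phat Q0 \<alpha> \<le> KL Q0 Q0" unfolding Dstar_def
      by (intro cInf_lower bddb) auto
    moreover have "KL Q0 Q0 = 0" unfolding KL_def using Q0pos by (simp add: less_imp_neq[symmetric])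
    moreover have "R p \<alpha> > 0"
    proof -
      have pa: "real p * (1 - \<alpha>) > 0" using that a1 by simp
      have "ln (1 / \<epsilon>) > 0" using assms by simp
      then have "1 / (real p * (1 - \<alpha>)) * ln (1 / \<epsilon>) > 0" using pa by simp
      moreover have "ln (real p * (1 - \<alpha>) + 1) \<ge> 0" using pa by simp
      then have "2 * real CARD('n) / (real p * (1 - \<alpha>)) * ln (real p * (1 - \<alpha>) + 1) \<ge> 0"
        using pa by simp
      ultimately show ?thesis unfolding R_def by linarith
    qed
    ultimately show False using aD by simp
  qed
  have bdda: "bdd_above (alphaL_set Phat Q0 \<epsilon> p)" for p
    by (rule bdd_aboveI[of _ 1]) (auto simp: setdef)
  have part1: "alphaL Phat Q0 \<epsilon> p \<le> \<kappa>" if "p \<ge> 1" for p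
  proof (cases "alphaL_set Phat Q0 \<epsilon> p = {}")
    case True then show ?thesis using kap0 by (simp add: alphaL_def)
  next
    case False
    have "Sup (alphaL_set Phat Q0 \<epsilon> p) \<le> \<kappa>"
      by (rule cSup_least[OF False]) (meson notin[OF that] not_le less_imp_le)
    then show ?thesis using False by (simp add: alphaL_def)
  qed
  have aL0: "alphaL Phat Q0 \<epsilon> p \<ge> 0" for p
  proof (cases "alphaL_set Phat Q0 \<epsilon> p = {}")
    case True then show ?thesis by (simp add: alphaL_def)
  next
    case False
    then obtain a where a: "a \<in> alphaL_set Phat Q0 \<epsilon> p" by blast
    then have "a \<le> Sup (alphaL_set Phat Q0 \<epsilon> p)" by (intro cSup_upper bdda)
    moreover have "a \<ge> 0" using a by (simp add: setdef)
    ultimately show ?thesis using False by (simp add: alphaL_def)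
  qed
  have lower: "eventually (\<lambda>p. alphaL Phat Q0 \<epsilon> p \<ge> \<alpha>) sequentially"
    if a: "0 \<le> \<alpha>" "\<alpha> < \<kappa>" for \<alpha>
  proof -
    have a1: "\<alpha> < 1"
    proof -
      have "f j \<le> 1" unfolding f_def using Ph0[of j] Q0pos[of j] by simp
      then show ?thesis using fj a by simp
    qed
    define b where "b = Phat j / (1 - \<alpha>)"
    have b0: "b \<ge> 0" unfolding b_def using Ph0[of j] a1 by simp
    have bq: "b < Q0 j"
    proof -
      have "1 - Phat j / Q0 j > \<alpha>" using fj a unfolding f_def by simp
      then have "Phat j < (1 - \<alpha>) * Q0 j" using Q0pos[of j] by (simp add: field_simps)
      then show ?thesis unfolding b_def using a1 by (simp add: field_simps)
    qed
    define c where "c = Q0 j - b + b * ln (b / Q0 j)"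
    have c0: "c > 0" unfolding c_def using c_pos b0 bq by simp
    have Dc: "Dstar Phat Q0 \<alpha> \<ge> c"
      unfolding Dstar_def
    proof (rule cInf_greatest)
      have "Phat \<in> amb_set Phat \<alpha>" unfolding amb_set_def
      proof (intro CollectI conjI allI)
        fix i show "Phat i \<le> Phat i / (1 - \<alpha>)"
          using Ph0[of i] a a1 by (simp add: field_simps mult_left_le)
      qed (use assms in auto)
      then show "(\<lambda>P. KL P Q0) ` amb_set Phat \<alpha> \<noteq> {}" by blast
    next
      fix x assume "x \<in> (\<lambda>P. KL P Q0) ` amb_set Phat \<alpha>"
      then obtain P where P: "P \<in> amb_set Phat \<alpha>" "x = KL P Q0" by auto
      have "P j \<le> b" using P unfolding amb_set_def b_def by simp
      then show "c \<le> x" using KL_strict[of P Q0 j b] P assms bq unfolding c_def amb_set_def by simp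
    qed
    have "((\<lambda>p. R p \<alpha>) \<longlongrightarrow> 0) sequentially"
    proof -
      have bpos: "0 < 1 - \<alpha>" using a1 by simp
      have "((\<lambda>p::nat. 1 / (real p * B) * L + 2 * N / (real p * B) * ln (real p * B + 1)) \<longlongrightarrow> 0) at_top"
        if "0 < B" for B L N :: real using that by real_asymp
      from this[OF bpos] show ?thesis unfolding R_def by simp
    qed
    then have "eventually (\<lambda>p. R p \<alpha> < c) sequentially" using c0 by (rule order_tendstoD)
    then show ?thesis
    proof (rule eventually_mono)
      fix p assume "R p \<alpha> < c"
      then have "\<alpha> \<in> alphaL_set Phat Q0 \<epsilon> p" using Dc a a1 by (simp add: setdef)
      then have "\<alpha> \<le> Sup (alphaL_set Phat Q0 \<epsilon> p)" by (intro cSup_upper bdda)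
      then show "\<alpha> \<le> alphaL Phat Q0 \<epsilon> p" using \<open>\<alpha> \<in> alphaL_set Phat Q0 \<epsilon> p\<close>
        by (auto simp: alphaL_def)
    qed
  qed
  have part2: "(\<lambda>p. alphaL Phat Q0 \<epsilon> p) \<longlonglongrightarrow> \<kappa>"
  proof (rule order_tendstoI)
    fix y assume "y < \<kappa>"
    show "eventually (\<lambda>p. y < alphaL Phat Q0 \<epsilon> p) sequentially"
    proof (cases "y < 0")
      case True then show ?thesis using aL0 by (intro always_eventually allI) (meson le_less_trans less_le_trans)
    next
      case False
      define \<alpha> where "\<alpha> = (y + \<kappa>) / 2"
      have "0 \<le> \<alpha>" "\<alpha> < \<kappa>" "y < \<alpha>" using False \<open>y < \<kappa>\<close> unfolding \<alpha>_def by auto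
      from lower[OF this(1,2)] show ?thesis
        by (rule eventually_mono) (use \<open>y < \<alpha>\<close> in simp)
    qed
  next
    fix y assume "\<kappa> < y"
    have "eventually (\<lambda>p::nat. p \<ge> 1) sequentially" by (rule eventually_ge_at_top)
    then show "eventually (\<lambda>p. alphaL Phat Q0 \<epsilon> p < y) sequentially"
      by (rule eventually_mono) (use part1 \<open>\<kappa> < y\<close> in force)
  qed
  show ?thesis using part1 part2 unfolding \<kappa>_def by blast
qed

end
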